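(* Let $Q\in\mathbb{R}^{n\times n}$ be symmetric positive definite, $\|x\|=\sqrt{x^TQx}$, $\|u\|_*=\sqrt{u^TQ^{-1}u}$. Let $f\colon\mathbb{R}^n\to\mathbb{R}$ be convex and differentiable with $\|\nabla f(x)-\nabla f(y)\|_*\le L\|x-y\|$ for all $x,y$, with a minimizer $x_\star$, $f_\star=f(x_\star)$. Let $w$ be differentiable and $1$-strongly convex with respect to $\|\cdot\|$, $V_x(y)=w(y)-\langle\nabla w(x),y-x\rangle-w(x)$. Let $\{\alpha_k\}_{k\ge1}$ be positive with $\alpha_1=\frac2L$, and $\tau_k=\frac2{\alpha_{k+1}L}$ with $0<\tau_k\le1$ for $k=0,1,\dots$. Given $x_0$, let $z_0=x_0$, $x_{-1}=x_0$, and for $k\ge0$ \[ y_{k+1}=x_k-L^{-1}Q^{-1}\nabla f(x_k),\quad z_{k+1}=\operatorname*{argmin}_{y}\{V_{z_k}(y)+\langle\alpha_{k+1}\nabla f(x_k),y-x_k\rangle\},\quad x_{k+1}=(1-\tau_{k+1})y_{k+1}+\tau_{k+1}z_{k+1}. \] Let $h(x)=f(x)-f_\star-\frac1{2L}\|\nabla f(x)\|_*^2$. Then for $k=0,1,\dots$, \[ \frac{\alpha_{k+1}^2L}{2}h(x_k)+V_{z_{k+1}}(x_\star)\le\frac{\alpha_{k+1}^2L-2\alpha_{k+1}}{2}h(x_{k-1})+V_{z_k}(x_\star). \]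
   Context: $\langle\cdot,\cdot\rangle$ is the Euclidean inner product. "$1$-strongly convex with respect to $\|\cdot\|$" means $w(y)\ge w(x)+\langle\nabla w(x),y-x\rangle+\frac12\|y-x\|^2$ for all $x,y$. *)

theory Defs
  imports "HOL-Analysis.Analysis"
begin

definition qnorm :: "real^'n^'n \<Rightarrow> real^'n \<Rightarrow> real" where
  "qnorm Q x = sqrt (x \<bullet> (Q *v x))"

definition qdnorm :: "real^'n^'n \<Rightarrow> real^'n \<Rightarrow> real" where
  "qdnorm Q u = sqrt (u \<bullet> (matrix_inv Q *v u))"

definition spd :: "real^'n^'n \<Rightarrow> bool" where
  "spd Q \<longleftrightarrow> transpose Q = Q \<and> (\<forall>x. x \<noteq> 0 \<longrightarrow> x \<bullet> (Q *v x) > 0)"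

definition bregman :: "(real^'n \<Rightarrow> real) \<Rightarrow> (real^'n \<Rightarrow> real^'n) \<Rightarrow> real^'n \<Rightarrow> real^'n \<Rightarrow> real" where
  "bregman w gw x y = w y - gw x \<bullet> (y - x) - w x"

end

theory Submission
  imports Defs
begin
lemma spd_inv:
  fixes Q :: "real^'n^'n"
  assumes "spd Q" shows "Q *v (matrix_inv Q *v a) = a"
proof -
  have "\<forall>x. Q *v x = 0 \<longrightarrow> x = 0"
  proof (intro allI impI)
    fix x assume "Q *v x = 0"
    then have "x \<bullet> (Q *v x) = 0" by simp
    then show "x = 0" using assms unfolding spd_def by (metis less_irrefl)
  qed
  then obtain B where "B ** Q = mat 1" using matrix_left_invertible_ker by blast
  then have "invertible Q" using invertible_left_inverse by blast
  then have "Q ** matrix_inv Q = mat 1"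
    unfolding invertible_def matrix_inv_def by (metis (mono_tags, lifting) someI_ex)
  then show ?thesis by (simp add: matrix_vector_mul_assoc)
qed

lemma spd_sym:
  fixes Q :: "real^'n^'n"
  assumes "spd Q" shows "a \<bullet> (Q *v b) = b \<bullet> (Q *v a)"
proof -
  have "a \<bullet> (Q *v b) = (a v* Q) \<bullet> b" by (simp add: dot_lmul_matrix)
  also have "a v* Q = a v* transpose Q" using assms by (simp add: spd_def)
  also have "\<dots> = Q *v a" by simp
  finally show ?thesis by (simp add: inner_commute)
qed

lemma spd_nonneg:
  fixes Q :: "real^'n^'n"
  assumes "spd Q" shows "0 \<le> a \<bullet> (Q *v a)"
  using assms unfolding spd_def by (cases "a = 0") (auto intro: less_imp_le)

lemma dual_nonneg:
  fixes Q :: "real^'n^'n"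
  assumes "spd Q" shows "0 \<le> a \<bullet> (matrix_inv Q *v a)"
proof -
  have "a \<bullet> (matrix_inv Q *v a) = (Q *v (matrix_inv Q *v a)) \<bullet> (matrix_inv Q *v a)"
    using spd_inv[OF assms] by simp
  also have "\<dots> = (matrix_inv Q *v a) \<bullet> (Q *v (matrix_inv Q *v a))" by (simp add: inner_commute)
  finally show ?thesis using spd_nonneg[OF assms] by simp
qed

lemma qdnorm_sq: "spd Q \<Longrightarrow> (qdnorm Q a)\<^sup>2 = a \<bullet> (matrix_inv Q *v a)"
  unfolding qdnorm_def using dual_nonneg by simp
lemma qnorm_sq: "spd Q \<Longrightarrow> (qnorm Q a)\<^sup>2 = a \<bullet> (Q *v a)"
  unfolding qnorm_def using spd_nonneg by simp

lemma key_ineq: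
  fixes Q :: "real^'n^'n"
  assumes "spd Q"
  shows "2 * s * (a \<bullet> d) \<le> s\<^sup>2 * (d \<bullet> (Q *v d)) + a \<bullet> (matrix_inv Q *v a)"
proof -
  define p where "p = matrix_inv Q *v a"
  have Qp: "Q *v p = a" using spd_inv[OF assms] p_def by simp
  have "0 \<le> (s *\<^sub>R d - p) \<bullet> (Q *v (s *\<^sub>R d - p))" by (rule spd_nonneg[OF assms])
  also have "\<dots> = s\<^sup>2 * (d \<bullet> (Q *v d)) - s * (d \<bullet> (Q *v p)) - s * (p \<bullet> (Q *v d)) + p \<bullet> (Q *v p)"
    by (simp add: matrix_vector_mult_diff_distrib matrix_vector_mult_scaleR inner_diff_left inner_diff_right power2_eq_square algebra_simps)
  also have "p \<bullet> (Q *v d) = d \<bullet> (Q *v p)" using spd_sym[OF assms] by simp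
  finally show ?thesis using Qp p_def by (simp add: inner_commute algebra_simps)
qed

lemma cs_ineq:
  fixes Q :: "real^'n^'n"
  assumes Q: "spd Q"
  shows "a \<bullet> d \<le> qdnorm Q a * qnorm Q d"
proof -
  define A where "A = a \<bullet> (matrix_inv Q *v a)"
  define D where "D = d \<bullet> (Q *v d)"
  define X where "X = a \<bullet> d"
  have A0: "0 \<le> A" using dual_nonneg[OF Q] A_def by simp
  have D0: "0 \<le> D" using spd_nonneg[OF Q] D_def by simp
  have ks: "\<And>s. 2 * s * X \<le> s\<^sup>2 * D + A" using key_ineq[OF Q] A_def D_def X_def by simp
  have rhs: "qdnorm Q a * qnorm Q d = sqrt (A * D)"
    by (simp add: qdnorm_def qnorm_def A_def D_def real_sqrt_mult)
  show ?thesis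
  proof (cases "D = 0")
    case True
    show ?thesis
    proof (cases "X \<le> 0")
      case True then show ?thesis using rhs X_def A0 D0 by (metis order_trans real_sqrt_ge_zero zero_le_mult_iff)
    next
      case False
      have "2 * ((A+1)/X) * X \<le> ((A+1)/X)\<^sup>2 * D + A" by (rule ks)
      then have "2 * (A+1) \<le> A" using False \<open>D = 0\<close> by simp
      then show ?thesis using A0 by simp
    qed
  next
    case False
    then have Dp: "D > 0" using D0 by simp
    have "2 * (X/D) * X \<le> (X/D)\<^sup>2 * D + A" by (rule ks)
    then have "X\<^sup>2 / D \<le> A" using Dp by (simp add: power2_eq_square field_simps)
    then have "X\<^sup>2 \<le> A * D" using Dp by (simp add: field_simps)
    then have "\<bar>X\<bar> \<le> sqrt (A * D)" using real_le_rsqrt by (metis real_sqrt_abs real_sqrt_le_mono)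
    then show ?thesis using rhs X_def by simp
  qed
qed

lemma qnorm_scale: "spd Q \<Longrightarrow> qnorm Q (t *\<^sub>R d) = \<bar>t\<bar> * qnorm Q d"
proof -
  have "(t *\<^sub>R d) \<bullet> (Q *v (t *\<^sub>R d)) = t\<^sup>2 * (d \<bullet> (Q *v d))"
    by (simp add: matrix_vector_mult_scaleR power2_eq_square)
  then show ?thesis unfolding qnorm_def by (simp add: real_sqrt_mult)
qed

lemma qnorm_nonneg: "spd Q \<Longrightarrow> 0 \<le> qnorm Q d"
  unfolding qnorm_def using spd_nonneg by simp

lemma descent:
  fixes Q :: "real^'n^'n" and F :: "real^'n \<Rightarrow> real"
  assumes Q: "spd Q"
    and Fg: "\<And>u. (F has_derivative (\<lambda>h. G u \<bullet> h)) (at u)"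
    and Gl: "\<And>u v. qdnorm Q (G u - G v) \<le> L * qnorm Q (u - v)"
  shows "F v \<le> F u + G u \<bullet> (v - u) + L / 2 * ((v - u) \<bullet> (Q *v (v - u)))"
proof -
  define d where "d = v - u"
  define D where "D = d \<bullet> (Q *v d)"
  define psi where "psi = (\<lambda>t. F (u + t *\<^sub>R d) - t * (G u \<bullet> d) - L / 2 * t\<^sup>2 * D)"
  have der: "DERIV psi t :> (G (u + t *\<^sub>R d) \<bullet> d - G u \<bullet> d - L * t * D)" for t
  proof -
    have "((\<lambda>t. u + t *\<^sub>R d) has_derivative (\<lambda>s. s *\<^sub>R d)) (at t)"
      by (auto intro!: derivative_eq_intros)
    from has_derivative_compose[OF this Fg]
    have "((\<lambda>t. F (u + t *\<^sub>R d)) has_derivative (\<lambda>s. G (u + t *\<^sub>R d) \<bullet> (s *\<^sub>R d))) (at t)" .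
    then have "DERIV (\<lambda>t. F (u + t *\<^sub>R d)) t :> G (u + t *\<^sub>R d) \<bullet> d"
      by (rule has_derivative_imp_has_field_derivative) (simp add: mult.commute)
    then show ?thesis unfolding psi_def
      by (auto intro!: derivative_eq_intros)
  qed
  have "psi 1 \<le> psi 0"
  proof (rule DERIV_nonpos_imp_nonincreasing[of 0 1])
    fix t :: real assume t: "0 \<le> t" "t \<le> 1"
    have "(G (u + t *\<^sub>R d) - G u) \<bullet> d \<le> qdnorm Q (G (u + t *\<^sub>R d) - G u) * qnorm Q d"
      by (rule cs_ineq[OF Q])
    also have "\<dots> \<le> L * qnorm Q (t *\<^sub>R d) * qnorm Q d"
      using Gl[of "u + t *\<^sub>R d" u] qnorm_nonneg[OF Q, of d] by (intro mult_right_mono) auto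
    also have "\<dots> = L * t * D"
      using t qnorm_scale[OF Q, of t d] qnorm_sq[OF Q, of d] D_def by (simp add: power2_eq_square)
    finally show "\<exists>y. DERIV psi t :> y \<and> y \<le> 0" using der[of t] by (auto simp: inner_diff_left)
  qed simp
  then show ?thesis unfolding psi_def d_def D_def by simp
qed

lemma tangent:
  fixes f :: "real^'n \<Rightarrow> real"
  assumes cf: "convex_on UNIV f"
    and fg: "\<And>u. (f has_derivative (\<lambda>h. G u \<bullet> h)) (at u)"
  shows "f u + G u \<bullet> (v - u) \<le> f v"
proof -
  define d where "d = v - u"
  define phi where "phi = (\<lambda>t::real. f (u + t *\<^sub>R d))"
  have cphi: "convex_on UNIV phi"
  proof (rule convex_onI)
    fix t a b :: real assume t: "0 < t" "t < 1"
    have "u + ((1 - t) *\<^sub>R a + t *\<^sub>R b) *\<^sub>R d = (1 - t) *\<^sub>R (u + a *\<^sub>R d) + t *\<^sub>R (u + b *\<^sub>R d)"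
      by (simp add: algebra_simps)
    then show "phi ((1 - t) *\<^sub>R a + t *\<^sub>R b) \<le> (1 - t) * phi a + t * phi b"
      unfolding phi_def using convex_onD[OF cf, of t "u + a *\<^sub>R d" "u + b *\<^sub>R d"] t by simp
  qed simp
  have "((\<lambda>t. u + t *\<^sub>R d) has_derivative (\<lambda>s. s *\<^sub>R d)) (at 0)"
    by (auto intro!: derivative_eq_intros)
  from has_derivative_compose[OF this fg]
  have "((\<lambda>t. f (u + t *\<^sub>R d)) has_derivative (\<lambda>s. G (u + 0 *\<^sub>R d) \<bullet> (s *\<^sub>R d))) (at 0)" by simp
  then have "(phi has_field_derivative (G u \<bullet> d)) (at 0)" unfolding phi_def
    by (rule has_derivative_imp_has_field_derivative) (simp add: mult.commute)
  then have "(phi has_field_derivative (G u \<bullet> d)) (at 0 within UNIV)" by simp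
  from convex_on_imp_above_tangent[OF cphi _ _ _ this, of 1]
  have "phi 1 - phi 0 \<ge> G u \<bullet> d" by simp
  then show ?thesis unfolding phi_def d_def by simp
qed

lemma cocoercive:
  fixes Q :: "real^'n^'n" and f :: "real^'n \<Rightarrow> real"
  assumes Q: "spd Q" and cf: "convex_on UNIV f"
    and fg: "\<And>u. (f has_derivative (\<lambda>h. G u \<bullet> h)) (at u)"
    and Gl: "\<And>u v. qdnorm Q (G u - G v) \<le> L * qnorm Q (u - v)"
    and L: "L > 0"
  shows "f u + G u \<bullet> (v - u) + 1 / (2 * L) * ((G v - G u) \<bullet> (matrix_inv Q *v (G v - G u))) \<le> f v"
proof -
  define phi where "phi = (\<lambda>y. f y - G u \<bullet> y)"
  define H where "H = (\<lambda>y. G y - G u)"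
  have pg: "(phi has_derivative (\<lambda>h. H y \<bullet> h)) (at y)" for y
    unfolding phi_def H_def using fg[of y]
    by (auto intro!: derivative_eq_intros simp: inner_diff_left)
  have Hl: "qdnorm Q (H a - H b) \<le> L * qnorm Q (a - b)" for a b
    unfolding H_def using Gl by simp
  have cphi: "convex_on UNIV phi" unfolding phi_def
    using convex_on_add[OF cf, of "\<lambda>y. - (G u \<bullet> y)"]
    by (simp add: convex_on_def inner_add_right algebra_simps)
  define a where "a = H v"
  define p where "p = matrix_inv Q *v a"
  define v' where "v' = v - (1 / L) *\<^sub>R p"
  have Qp: "Q *v p = a" using spd_inv[OF Q] p_def by simp
  have "phi u \<le> phi v'"
  proof -
    have "phi u + H u \<bullet> (v' - u) \<le> phi v'" by (rule tangent[OF cphi pg])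
    then show ?thesis by (simp add: H_def)
  qed
  also have "phi v' \<le> phi v + H v \<bullet> (v' - v) + L / 2 * ((v' - v) \<bullet> (Q *v (v' - v)))"
    by (rule descent[OF Q pg Hl])
  also have "\<dots> = phi v - 1 / (2 * L) * (a \<bullet> p)"
  proof -
    have "v' - v = (- (1 / L)) *\<^sub>R p" unfolding v'_def by simp
    then have "(v' - v) \<bullet> (Q *v (v' - v)) = (1/L)\<^sup>2 * (p \<bullet> a)"
      using Qp by (simp only: matrix_vector_mult_scaleR inner_scaleR_left inner_scaleR_right) (simp add: power2_eq_square)
    moreover have "H v \<bullet> (v' - v) = - (1/L) * (a \<bullet> p)" unfolding v'_def a_def by simp
    ultimately show ?thesis using L by (simp add: inner_commute power2_eq_square field_simps)
  qed
  finally show ?thesis unfolding phi_def a_def p_def H_def by (simp add: inner_diff_right)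
qed

lemma inv_sym:
  fixes Q :: "real^'n^'n"
  assumes Q: "spd Q"
  shows "a \<bullet> (matrix_inv Q *v b) = b \<bullet> (matrix_inv Q *v a)"
proof -
  have "a \<bullet> (matrix_inv Q *v b) = (matrix_inv Q *v b) \<bullet> (Q *v (matrix_inv Q *v a))"
    using spd_inv[OF Q, of a] by (simp add: inner_commute)
  also have "\<dots> = (matrix_inv Q *v a) \<bullet> (Q *v (matrix_inv Q *v b))" by (rule spd_sym[OF Q])
  also have "\<dots> = b \<bullet> (matrix_inv Q *v a)" using spd_inv[OF Q, of b] by (simp add: inner_commute)
  finally show ?thesis .
qed

theorem lemma2:
  fixes Q :: "real^'n^'n"
    and f :: "real^'n \<Rightarrow> real" and gf :: "real^'n \<Rightarrow> real^'n"
    and w :: "real^'n \<Rightarrow> real" and gw :: "real^'n \<Rightarrow> real^'n"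
    and L :: real and xs :: "real^'n"
    and \<alpha> \<tau> :: "nat \<Rightarrow> real"
    and x y z :: "nat \<Rightarrow> real^'n"
    and k :: nat
  assumes Q: "spd Q"
    and f_convex: "convex_on UNIV f"
    and f_grad: "\<And>u. (f has_derivative (\<lambda>h. gf u \<bullet> h)) (at u)"
    and f_lip: "\<And>u v. qdnorm Q (gf u - gf v) \<le> L * qnorm Q (u - v)"
    and xs_min: "\<And>u. f xs \<le> f u"
    and w_grad: "\<And>u. (w has_derivative (\<lambda>h. gw u \<bullet> h)) (at u)"
    and w_sc: "\<And>u v. w v \<ge> w u + gw u \<bullet> (v - u) + (1/2) * (qnorm Q (v - u))\<^sup>2"
    and \<alpha>_pos: "\<And>j. j \<ge> 1 \<Longrightarrow> \<alpha> j > 0"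
    and \<alpha>1: "\<alpha> 1 = 2 / L"
    and \<tau>_def: "\<And>j. \<tau> j = 2 / (\<alpha> (j + 1) * L)"
    and \<tau>_bnd: "\<And>j. 0 < \<tau> j \<and> \<tau> j \<le> 1"
    and z0: "z 0 = x 0"
    and y_step: "\<And>j. y (j + 1) = x j - (1 / L) *\<^sub>R (matrix_inv Q *v gf (x j))"
    and z_step: "\<And>j u. bregman w gw (z j) (z (j + 1)) + (\<alpha> (j + 1) *\<^sub>R gf (x j)) \<bullet> (z (j + 1) - x j)
                     \<le> bregman w gw (z j) u + (\<alpha> (j + 1) *\<^sub>R gf (x j)) \<bullet> (u - x j)"
    and x_step: "\<And>j. x (j + 1) = (1 - \<tau> (j + 1)) *\<^sub>R y (j + 1) + \<tau> (j + 1) *\<^sub>R z (j + 1)"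
  shows "(let h = (\<lambda>u. f u - f xs - 1 / (2 * L) * (qdnorm Q (gf u))\<^sup>2);
              xprev = (if k = 0 then x 0 else x (k - 1))
          in (\<alpha> (k + 1))\<^sup>2 * L / 2 * h (x k) + bregman w gw (z (k + 1)) xs
             \<le> ((\<alpha> (k + 1))\<^sup>2 * L - 2 * \<alpha> (k + 1)) / 2 * h xprev + bregman w gw (z k) xs)"
proof -
  define P where "P = matrix_inv Q"
  have Lpos: "L > 0" using \<alpha>_pos[of 1] \<alpha>1 by (simp add: zero_less_divide_iff)
  have gxs: "gf xs = 0"
  proof -
    have "(\<lambda>h. gf xs \<bullet> h) = (\<lambda>v. 0)"
      by (rule differential_zero_maxmin[of xs UNIV f]) (use f_grad xs_min in auto)
    then have "gf xs \<bullet> gf xs = 0" by metis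
    then show ?thesis by simp
  qed
  define a where "a = \<alpha> (k + 1)"
  define g where "g = gf (x k)"
  define c where "c = (a\<^sup>2 * L - 2 * a) / 2"
  define N where "N = g \<bullet> (P *v g)"
  have apos: "a > 0" using \<alpha>_pos a_def by simp
  have aL: "a * L \<ge> 2"
  proof -
    have "2 / (a * L) \<le> 1" using \<tau>_bnd[of k] \<tau>_def[of k] a_def by simp
    then show ?thesis using apos Lpos by (simp add: field_simps)
  qed
  have c0: "c \<ge> 0" unfolding c_def using aL apos
    by (simp add: power2_eq_square)
  have gwz: "gw (z (k + 1)) = gw (z k) - a *\<^sub>R g"
  proof -
    define Phi where "Phi = (\<lambda>u. bregman w gw (z k) u + (a *\<^sub>R g) \<bullet> (u - x k))"
    have "(Phi has_derivative (\<lambda>h. (gw (z (k+1)) - gw (z k) + a *\<^sub>R g) \<bullet> h)) (at (z (k+1)))"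
      unfolding Phi_def bregman_def using w_grad[of "z (k+1)"]
      by (auto intro!: derivative_eq_intros simp: inner_diff_left inner_add_left)
    note der = this
    have minP: "\<forall>y\<in>UNIV. Phi (z (k+1)) \<le> Phi y"
      using z_step[of k] unfolding Phi_def a_def g_def by simp
    have "(\<lambda>h. (gw (z (k+1)) - gw (z k) + a *\<^sub>R g) \<bullet> h) = (\<lambda>v. 0)"
      using differential_zero_maxmin[of "z (k+1)" UNIV Phi, OF _ _ der] minP by simp
    then have "(gw (z (k+1)) - gw (z k) + a *\<^sub>R g) \<bullet> (gw (z (k+1)) - gw (z k) + a *\<^sub>R g) = 0" by metis
    then have "gw (z (k+1)) - gw (z k) + a *\<^sub>R g = 0" by (simp only: inner_eq_zero_iff)
    then show ?thesis by (simp add: algebra_simps)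
  qed
  define V0 where "V0 = bregman w gw (z k) xs"
  define V1 where "V1 = bregman w gw (z (k+1)) xs"
  have three: "a * (g \<bullet> (z (k+1) - xs)) = V0 - V1 - bregman w gw (z k) (z (k+1))"
    unfolding V0_def V1_def bregman_def gwz by (simp add: algebra_simps inner_diff_left inner_diff_right)
  have sc: "bregman w gw (z k) (z (k+1)) \<ge> 1/2 * ((z (k+1) - z k) \<bullet> (Q *v (z (k+1) - z k)))"
    using w_sc[of "z k" "z (k+1)"] qnorm_sq[OF Q] unfolding bregman_def by simp
  have ki: "2 * (-1) * ((a *\<^sub>R g) \<bullet> (z (k+1) - z k)) \<le> (-1)\<^sup>2 * ((z (k+1) - z k) \<bullet> (Q *v (z (k+1) - z k))) + (a *\<^sub>R g) \<bullet> (P *v (a *\<^sub>R g))"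
    unfolding P_def by (rule key_ineq[OF Q])
  have Nsc: "(a *\<^sub>R g) \<bullet> (P *v (a *\<^sub>R g)) = a\<^sup>2 * N"
    unfolding N_def by (simp add: matrix_vector_mult_scaleR power2_eq_square)
  have M: "a * (g \<bullet> (z k - xs)) \<le> a\<^sup>2 / 2 * N + V0 - V1"
  proof -
    have "a * (g \<bullet> (z k - xs)) = a * (g \<bullet> (z k - z (k+1))) + a * (g \<bullet> (z (k+1) - xs))"
      by (simp add: inner_diff_right algebra_simps)
    moreover have "a * (g \<bullet> (z k - z (k+1))) = - ((a *\<^sub>R g) \<bullet> (z (k+1) - z k))"
      by (simp add: inner_diff_right algebra_simps)
    ultimately show ?thesis using three sc ki Nsc by simp
  qed
  have coco1: "f (x k) + g \<bullet> (xs - x k) + 1 / (2 * L) * N \<le> f xs"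
  proof -
    have e: "(gf xs - gf (x k)) \<bullet> (P *v (gf xs - gf (x k))) = N"
      unfolding gxs N_def g_def by (simp only: matrix_vector_mult_diff_distrib) simp
    show ?thesis using cocoercive[OF Q f_convex f_grad f_lip Lpos, of "x k" xs] e
      unfolding P_def g_def by simp
  qed
  define F where "F = f (x k) - f xs"
  define Y where "Y = (if k = 0 then x 0 else y k)"
  define xp where "xp = (if k = 0 then x 0 else x (k - 1))"
  define gp where "gp = gf xp"
  define Np where "Np = gp \<bullet> (P *v gp)"
  define Fp where "Fp = f xp - f xs"
  have A1: "a * F \<le> a * (g \<bullet> (x k - xs)) - a * (N / (2 * L))"
  proof -
    have "F \<le> g \<bullet> (x k - xs) - N / (2 * L)" using coco1 unfolding F_def
      by (simp add: inner_diff_right)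
    from mult_left_mono[OF this, of a] apos show ?thesis by (simp add: right_diff_distrib)
  qed
  have A3: "a * (g \<bullet> (x k - xs)) = a * (g \<bullet> (x k - z k)) + a * (g \<bullet> (z k - xs))"
    by (simp add: inner_diff_right algebra_simps)
  have A45: "a * (g \<bullet> (x k - z k)) = c * (g \<bullet> (Y - x k)) \<and>
     c * (F + g \<bullet> (Y - x k) + N / (2 * L)) \<le> c * (Fp - Np / (2 * L))"
  proof (cases k)
    case 0
    have "c = 0" unfolding c_def a_def 0 using \<alpha>1 Lpos by (simp add: power2_eq_square)
    then show ?thesis using z0 0 by simp
  next
    case (Suc m)
    have km: "k = m + 1" using Suc by simp
    define t where "t = \<tau> k"
    have t_eq: "t = 2 / (a * L)" unfolding t_def a_def using \<tau>_def by simp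
    have xk: "x k = (1 - t) *\<^sub>R y k + t *\<^sub>R z k" unfolding t_def km using x_step[of m] .
    have yk: "y k = x m - (1 / L) *\<^sub>R (P *v gp)" unfolding km P_def gp_def xp_def using y_step[of m] by simp
    have Yk: "Y = y k" unfolding Y_def using Suc by simp
    have xpm: "xp = x m" unfolding xp_def using Suc by simp
    have sc_eq: "a * (1 - t) = c * t" unfolding t_eq c_def using apos Lpos
      by (simp add: field_simps power2_eq_square)
    have A4: "a * (g \<bullet> (x k - z k)) = c * (g \<bullet> (Y - x k))"
    proof -
      have "x k - z k = (1 - t) *\<^sub>R (y k - z k)" unfolding xk by (simp add: algebra_simps)
      moreover have "Y - x k = t *\<^sub>R (y k - z k)" unfolding xk Yk by (simp add: algebra_simps)
      ultimately show ?thesis using sc_eq by (simp add: mult.assoc[symmetric])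
    qed
    have coco2: "f (x k) + g \<bullet> (x m - x k) + 1 / (2 * L) * ((gp - g) \<bullet> (P *v (gp - g))) \<le> f (x m)"
      using cocoercive[OF Q f_convex f_grad f_lip Lpos, of "x k" "x m"]
      unfolding P_def g_def gp_def xpm by simp
    have S: "g \<bullet> (P *v gp) = gp \<bullet> (P *v g)" unfolding P_def by (rule inv_sym[OF Q])
    have ex: "(gp - g) \<bullet> (P *v (gp - g)) = Np - 2 * (g \<bullet> (P *v gp)) + N"
      unfolding Np_def N_def using S by (simp add: matrix_vector_mult_diff_distrib inner_diff_left inner_diff_right inner_commute)
    have gY: "g \<bullet> (Y - x k) = g \<bullet> (x m - x k) - (1 / L) * (g \<bullet> (P *v gp))"
      unfolding Yk yk by (simp add: inner_diff_right algebra_simps)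
    have E: "F + g \<bullet> (Y - x k) + N / (2 * L) \<le> Fp - Np / (2 * L)"
    proof -
      have "1 / (2 * L) * ((gp - g) \<bullet> (P *v (gp - g))) = Np / (2 * L) - (1 / L) * (g \<bullet> (P *v gp)) + N / (2 * L)"
        unfolding ex using Lpos by (simp add: field_simps)
      then show ?thesis using coco2 gY unfolding F_def Fp_def xpm by linarith
    qed
    show ?thesis using A4 mult_left_mono[OF E c0] by simp
  qed
  have cN: "c * (N / (2 * L)) = a\<^sup>2 * N / 4 - a * (N / (2 * L))"
    unfolding c_def using Lpos by (simp add: field_simps power2_eq_square)
  have M': "a * (g \<bullet> (z k - xs)) \<le> a\<^sup>2 * N / 2 + V0 - V1" using M by simp
  have A5: "c * F + c * (g \<bullet> (Y - x k)) + c * (N / (2 * L)) \<le> c * (Fp - Np / (2 * L))"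
    using A45 by (simp only: distrib_left)
  have eq: "(c + a) * (F - N / (2 * L)) = c * F + a * F - c * (N / (2 * L)) - a * (N / (2 * L))"
    by (simp only: distrib_right right_diff_distrib)
  have main: "(c + a) * (F - N / (2 * L)) + V1 \<le> c * (Fp - Np / (2 * L)) + V0"
    using A1 A3 A45 M' cN eq A5 by linarith
  have ca: "(\<alpha> (k + 1))\<^sup>2 * L / 2 = c + a" unfolding c_def a_def by (simp add: field_simps)
  have cc: "((\<alpha> (k + 1))\<^sup>2 * L - 2 * \<alpha> (k + 1)) / 2 = c" unfolding c_def a_def ..
  have qd: "\<And>u. (qdnorm Q u)\<^sup>2 = u \<bullet> (P *v u)" unfolding P_def using qdnorm_sq[OF Q] by simp
  have l: "f (x k) - f xs - 1 / (2 * L) * (qdnorm Q (gf (x k)))\<^sup>2 = F - N / (2 * L)"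
    unfolding qd F_def N_def g_def by simp
  have r: "f (if k = 0 then x 0 else x (k - 1)) - f xs - 1 / (2 * L) * (qdnorm Q (gf (if k = 0 then x 0 else x (k - 1))))\<^sup>2 = Fp - Np / (2 * L)"
    unfolding qd Fp_def Np_def gp_def xp_def by simp
  show ?thesis
    unfolding Let_def ca cc l r using main unfolding V0_def V1_def .
qed
end
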